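(* Let $G\subset\mathrm{SU}(2)$ be a subgroup and let $\sigma\in\operatorname{Hom}(\pi_1(M),G)$, with $[\sigma]\in E$ having global coordinates $(x,y,z)$. Then for every permutation $(x',y',z')$ of $(x,y,z)$ there is $\sigma'\in\operatorname{Hom}(\pi_1(M),G)$ whose class has global coordinates $(x',y',z')$. If in addition $-I\in G$, then each of the triples $(-x,y,-z)$, $(x,-y,-z)$, $(-x,-y,z)$ is likewise the global coordinate triple of the class of some element of $\operatorname{Hom}(\pi_1(M),G)$.
   Context: $M$ is a torus with one boundary component; $\pi_1(M)$ is the free group on $X,Y$. $E=\operatorname{Hom}(\pi_1(M),\mathrm{SU}(2))/\mathrm{SU}(2)$ (conjugation action), and the global coordinates of a class $[\sigma]\in E$ are $(\operatorname{tr}\sigma(X),\operatorname{tr}\sigma(Y),\operatorname{tr}\sigma(XY))$, which determine the class uniquely. *)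

theory Defs
  imports "HOL-Analysis.Analysis"
begin

type_synonym cmat2 = "complex^2^2"

definition mtrace :: "cmat2 \<Rightarrow> complex" where
  "mtrace A = A$1$1 + A$2$2"

definition madj :: "cmat2 \<Rightarrow> cmat2" where
  "madj A = (\<chi> i j. cnj (A$j$i))"

definition SU2 :: "cmat2 set" where
  "SU2 = {A. A ** madj A = mat 1 \<and> madj A ** A = mat 1 \<and> det A = 1}"

definition subgroup_SU2 :: "cmat2 set \<Rightarrow> bool" where
  "subgroup_SU2 G \<longleftrightarrow> G \<subseteq> SU2 \<and> mat 1 \<in> G \<and>
     (\<forall>A\<in>G. \<forall>B\<in>G. A ** B \<in> G) \<and> (\<forall>A\<in>G. matrix_inv A \<in> G)"

text \<open>Since pi_1(M) is free on X, Y, a homomorphism sigma : pi_1(M) \<rightarrow> G is the same as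
  the pair (sigma X, sigma Y) \<in> G \<times> G.\<close>
definition global_coords :: "cmat2 \<Rightarrow> cmat2 \<Rightarrow> real \<times> real \<times> real" where
  "global_coords A B = (Re (mtrace A), Re (mtrace B), Re (mtrace (A ** B)))"

end

theory Submission
  imports Defs
begin

lemma inv_SU2: assumes "A \<in> SU2" shows "matrix_inv A = madj A"
proof -
  let ?M = "matrix_inv A"
  have ex: "\<exists>M. A ** M = mat 1 \<and> M ** A = mat 1" using assms unfolding SU2_def by blast
  have h: "A ** ?M = mat 1 \<and> ?M ** A = mat 1"
    unfolding matrix_inv_def by (rule someI_ex[OF ex])
  have "?M = ?M ** (A ** madj A)" using assms unfolding SU2_def by simp
  also have "\<dots> = (?M ** A) ** madj A" by (simp add: matrix_mul_assoc)
  also have "\<dots> = madj A" using h by simp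
  finally show ?thesis .
qed

lemma tr_madj: "Re (mtrace (madj A)) = Re (mtrace A)"
  by (simp add: mtrace_def madj_def)

lemma tr_comm: "mtrace (A ** B) = mtrace (B ** A)"
  by (simp add: mtrace_def matrix_matrix_mult_def sum_2 algebra_simps)

lemma tr_neg: "mtrace (- A) = - mtrace A"
  by (simp add: mtrace_def)

lemma neg_mul: "(- mat 1) ** (A::cmat2) = - A"
  by (simp add: matrix_matrix_mult_def mat_def vec_eq_iff sum_2 forall_2)

lemma mul_neg: "(A::cmat2) ** (- B) = - (A ** B)"
  by (simp add: matrix_matrix_mult_def vec_eq_iff sum_2 forall_2 algebra_simps)

lemma neg_mul2: "(- A::cmat2) ** B = - (A ** B)"
  by (simp add: matrix_matrix_mult_def vec_eq_iff sum_2 forall_2 algebra_simps)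

lemma swap:
  assumes "A \<in> G" "B \<in> G" "global_coords A B = (x,y,z)"
  shows "\<exists>A'\<in>G. \<exists>B'\<in>G. global_coords A' B' = (y,x,z)"
  using assms by (intro bexI[of _ B] bexI[of _ A]) (auto simp: global_coords_def tr_comm)

lemma rot:
  assumes G: "subgroup_SU2 G" and "A \<in> G" "B \<in> G" "global_coords A B = (x,y,z)"
  shows "\<exists>A'\<in>G. \<exists>B'\<in>G. global_coords A' B' = (x,z,y)"
proof -
  have S: "A \<in> SU2" using G assms(2) unfolding subgroup_SU2_def by blast
  have i: "matrix_inv A \<in> G" "A ** B \<in> G" using G assms(2,3) unfolding subgroup_SU2_def by auto
  have "madj A ** (A ** B) = B" using S unfolding SU2_def by (simp add: matrix_mul_assoc)
  then have "global_coords (matrix_inv A) (A ** B) = (x,z,y)"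
    using assms(4) by (simp add: inv_SU2[OF S] global_coords_def tr_madj)
  with i show ?thesis by blast
qed

theorem proposition3p1:
  fixes G :: "cmat2 set" and A B :: cmat2 and x y z :: real
  assumes "subgroup_SU2 G"
    and "A \<in> G" and "B \<in> G"
    and "global_coords A B = (x, y, z)"
  shows "(\<forall>t \<in> {(x,y,z), (x,z,y), (y,x,z), (y,z,x), (z,x,y), (z,y,x)}.
            \<exists>A'\<in>G. \<exists>B'\<in>G. global_coords A' B' = t)
       \<and> (- mat 1 \<in> G \<longrightarrow>
            (\<forall>t \<in> {(-x,y,-z), (x,-y,-z), (-x,-y,z)}.
               \<exists>A'\<in>G. \<exists>B'\<in>G. global_coords A' B' = t))"
proof
  note G = assms(1)
  have p1: "\<exists>A'\<in>G. \<exists>B'\<in>G. global_coords A' B' = (x,y,z)" using assms by blast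
  have p2: "\<exists>A'\<in>G. \<exists>B'\<in>G. global_coords A' B' = (x,z,y)" using rot[OF G assms(2-4)] .
  have p3: "\<exists>A'\<in>G. \<exists>B'\<in>G. global_coords A' B' = (y,x,z)" using swap[OF assms(2-4)] .
  have p4: "\<exists>A'\<in>G. \<exists>B'\<in>G. global_coords A' B' = (z,x,y)" using p2 swap by metis
  have p5: "\<exists>A'\<in>G. \<exists>B'\<in>G. global_coords A' B' = (y,z,x)" using p3 rot[OF G] by metis
  have p6: "\<exists>A'\<in>G. \<exists>B'\<in>G. global_coords A' B' = (z,y,x)" using p5 swap by metis
  show "\<forall>t \<in> {(x,y,z), (x,z,y), (y,x,z), (y,z,x), (z,x,y), (z,y,x)}.
            \<exists>A'\<in>G. \<exists>B'\<in>G. global_coords A' B' = t"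
    using p1 p2 p3 p4 p5 p6 by blast
  show "- mat 1 \<in> G \<longrightarrow>
            (\<forall>t \<in> {(-x,y,-z), (x,-y,-z), (-x,-y,z)}.
               \<exists>A'\<in>G. \<exists>B'\<in>G. global_coords A' B' = t)"
  proof
    assume N: "- mat 1 \<in> G"
    have cl: "\<And>P Q. P \<in> G \<Longrightarrow> Q \<in> G \<Longrightarrow> P ** Q \<in> G" using G unfolding subgroup_SU2_def by blast
    have nA: "- A \<in> G" using cl[OF N assms(2)] by (simp add: neg_mul)
    have nB: "- B \<in> G" using cl[OF N assms(3)] by (simp add: neg_mul)
    have "global_coords (- A) B = (-x,y,-z)" "global_coords A (- B) = (x,-y,-z)"
      "global_coords (- A) (- B) = (-x,-y,z)"
      using assms(4) by (simp_all add: global_coords_def tr_neg mul_neg neg_mul2)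
    then show "\<forall>t \<in> {(-x,y,-z), (x,-y,-z), (-x,-y,z)}.
               \<exists>A'\<in>G. \<exists>B'\<in>G. global_coords A' B' = t"
      using nA nB assms(2,3) by blast
  qed
qed

end
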